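(* Let $\Gamma\subset\mathbb{N}$ be a numerical semigroup of multiplicity (smallest nonzero element) at least $3$, with set of gaps $L=\mathbb{N}\setminus\Gamma$ and genus $\delta=|L|$, and let $\mathcal{O}=\k[\Gamma]$ be the ring of the monomial curve. Then for every $k\ge1$ \[d_k=\dim_\k\operatorname{Coker}\big(\operatorname{Hom}_{\mathcal{O}}(\omega^{\otimes k},\mathcal{O})\to\mathcal{O}\big)=|(k+1)L|+(2k+1)-\delta.\] Consequently $d_k>2k\delta$ if and only if $|(k+1)L|>(2k+1)(\delta-1)$.
   Context: Ground field $\k$ algebraically closed, characteristic $0$. $\k[\Gamma]=\bigoplus_{a\in\Gamma}\k t^a\subset K=\k((t))$ (or its localisation/completion). $(k+1)L$ denotes the sumset $L+\dots+L$ ($k+1$ summands) and $|\cdot|$ its cardinality. The dualising module is embedded in $K$ via $dt\mapsto 1$, giving the fractional ideal $\omega$ spanned by $\k[[t]]$ and the monomials $t^{-\ell-1}$, $\ell\in L$. The invariant $d_k$ is $\dim_\k\mathcal{O}/(\mathcal{O}:_K\omega^k)$, where $\omega^k$ is the $k$-th power of this fractional ideal and $\mathcal{O}:_K\omega^k=\{x\in K: x\omega^k\subset\mathcal{O}\}$ (the image of $\operatorname{Hom}(\omega^{\otimes k},\mathcal{O})$ in $\mathcal{O}$). *)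

theory Defs
  imports "HOL-Computational_Algebra.Polynomial" "HOL-Computational_Algebra.Formal_Laurent_Series"
begin

definition alg_closed :: "'a::field itself \<Rightarrow> bool" where
  "alg_closed _ \<longleftrightarrow> (\<forall>p::'a poly. degree p > 0 \<longrightarrow> (\<exists>x. poly p x = 0))"

definition numerical_semigroup :: "nat set \<Rightarrow> bool" where
  "numerical_semigroup G \<longleftrightarrow> 0 \<in> G \<and> (\<forall>a\<in>G. \<forall>b\<in>G. a + b \<in> G) \<and> finite (UNIV - G)"

definition multiplicity :: "nat set \<Rightarrow> nat" where
  "multiplicity G = (LEAST m. m \<in> G \<and> m > 0)"

definition gaps :: "nat set \<Rightarrow> nat set" where
  "gaps G = UNIV - G"

fun sumset :: "nat \<Rightarrow> nat set \<Rightarrow> nat set" where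
  "sumset 0 A = {0}"
| "sumset (Suc n) A = {a + b | a b. a \<in> A \<and> b \<in> sumset n A}"

(* O = k[[Gamma]] inside K = k((t)): Laurent series supported on Gamma *)
definition monomial_ring :: "'a::field itself \<Rightarrow> nat set \<Rightarrow> 'a fls set" where
  "monomial_ring _ G = {f. \<forall>n. fls_nth f n \<noteq> 0 \<longrightarrow> 0 \<le> n \<and> nat n \<in> G}"

(* omega: spanned by k[[t]] and the monomials t^(-l-1), l a gap *)
definition omega_mod :: "'a::field itself \<Rightarrow> nat set \<Rightarrow> 'a fls set" where
  "omega_mod _ G = {f. \<forall>n. fls_nth f n \<noteq> 0 \<longrightarrow> 0 \<le> n \<or> (\<exists>l\<in>gaps G. n = - int l - 1)}"

definition frac_prod :: "'a::field fls set \<Rightarrow> 'a fls set \<Rightarrow> 'a fls set" where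
  "frac_prod M N = {x. \<exists>(n::nat) a b. (\<forall>i<n. a i \<in> M \<and> b i \<in> N) \<and> x = (\<Sum>i<n. a i * b i)}"

fun frac_pow :: "'a::field fls set \<Rightarrow> 'a fls set \<Rightarrow> nat \<Rightarrow> 'a fls set" where
  "frac_pow R W 0 = R"
| "frac_pow R W (Suc k) = frac_prod W (frac_pow R W k)"

definition colon :: "'a::field fls set \<Rightarrow> 'a fls set \<Rightarrow> 'a fls set" where
  "colon R I = {x. \<forall>y\<in>I. x * y \<in> R}"

(* dim_k V/U for a k-subspace U of V: least number of vectors spanning V modulo U *)
definition quot_dim :: "'a::field fls set \<Rightarrow> 'a fls set \<Rightarrow> nat" where
  "quot_dim V U = (LEAST n::nat. \<exists>v. (\<forall>i<n. v i \<in> V) \<and>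
      (\<forall>x\<in>V. \<exists>c. \<exists>u\<in>U. x = (\<Sum>i<n. fls_const (c i) * v i) + u))"

definition d_inv :: "'a::field itself \<Rightarrow> nat set \<Rightarrow> nat \<Rightarrow> nat" where
  "d_inv T G k = quot_dim (monomial_ring T G)
      (colon (monomial_ring T G) (frac_pow (monomial_ring T G) (omega_mod T G) k))"

end

theory Submission
  imports Defs
begin
unbundle fps_syntax



definition SupS :: "int set \<Rightarrow> 'a::field fls set" where
  "SupS A = {f. \<forall>n. fls_nth f n \<noteq> 0 \<longrightarrow> n \<in> A}"

abbreviation xmon :: "int \<Rightarrow> 'a::field fls" where
  "xmon s \<equiv> fls_shift (-s) 1"

lemma mono_nth: "(xmon s :: 'a::field fls) $$ n = (if n = s then 1 else 0)"
  by simp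

lemma mono_Sup: "s \<in> A \<Longrightarrow> (xmon s :: 'a::field fls) \<in> SupS A"
  by (auto simp: SupS_def)

lemma times_nth_nz:
  fixes f g :: "'a::field fls"
  assumes "(f * g) $$ n \<noteq> 0"
  shows "\<exists>i. f $$ i \<noteq> 0 \<and> g $$ (n - i) \<noteq> 0"
proof -
  from assms have "(\<Sum>i=fls_subdegree f..n - fls_subdegree g. f $$ i * g $$ (n - i)) \<noteq> 0"
    by (simp add: fls_times_nth(2))
  then obtain i where "f $$ i * g $$ (n - i) \<noteq> 0"
    by (meson sum.not_neutral_contains_not_neutral)
  thus ?thesis by auto
qed

definition psum :: "int set \<Rightarrow> int set \<Rightarrow> int set" where
  "psum A B = {a + b | a b. a \<in> A \<and> b \<in> B}"

lemma Sup_times: "f \<in> SupS A \<Longrightarrow> g \<in> SupS B \<Longrightarrow> f * g \<in> SupS (psum A B)"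
  unfolding SupS_def psum_def
proof (safe)
  fix n assume f: "\<forall>n. f $$ n \<noteq> 0 \<longrightarrow> n \<in> A" and g: "\<forall>n. g $$ n \<noteq> 0 \<longrightarrow> n \<in> B"
    and "(f * g) $$ n \<noteq> 0"
  then obtain i where "f $$ i \<noteq> 0" "g $$ (n - i) \<noteq> 0" using times_nth_nz by blast
  then show "\<exists>a b. n = a + b \<and> a \<in> A \<and> b \<in> B" using f g by (intro exI[of _ i] exI[of _ "n-i"]) auto
qed

lemma Sup_sum: "(\<And>i. i \<in> I \<Longrightarrow> f i \<in> SupS A) \<Longrightarrow> (\<Sum>i\<in>I. f i) \<in> SupS A"
proof (induction I rule: infinite_finite_induct)
  case (infinite A) then show ?case by (simp add: SupS_def)
next
  case empty then show ?case by (simp add: SupS_def)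
next
  case (insert x F)
  hence a: "f x \<in> SupS A" "sum f F \<in> SupS A" by auto
  show ?case unfolding SupS_def
  proof (safe)
    fix n assume "(\<Sum>i\<in>insert x F. f i) $$ n \<noteq> 0"
    hence "f x $$ n \<noteq> 0 \<or> sum f F $$ n \<noteq> 0" using insert by auto
    thus "n \<in> A" using a by (auto simp: SupS_def)
  qed
qed

lemma frac_prod_Sup:
  assumes "M \<subseteq> SupS A" "N \<subseteq> SupS B"
  shows "frac_prod M N \<subseteq> SupS (psum A B)"
  unfolding frac_prod_def using assms by (auto intro!: Sup_sum Sup_times)

lemma frac_prod_mono:
  assumes "x \<in> M" "y \<in> N"
  shows "x * y \<in> frac_prod M N"
  unfolding frac_prod_def
  by (rule CollectI, rule exI[of _ 1], rule exI[of _ "\<lambda>_. x"], rule exI[of _ "\<lambda>_. y"])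
     (use assms in auto)




lemma sumset_Suc_iff: "x \<in> sumset (Suc n) A \<longleftrightarrow> (\<exists>a b. x = a + b \<and> a \<in> A \<and> b \<in> sumset n A)"
  by auto

lemma sumset_SucI: "a \<in> A \<Longrightarrow> b \<in> sumset n A \<Longrightarrow> a + b \<in> sumset (Suc n) A"
  by auto

locale nsg =
  fixes G :: "nat set"
  assumes ns: "numerical_semigroup G" and m3: "multiplicity G \<ge> 3"
begin

abbreviation "L \<equiv> gaps G"
abbreviation "m \<equiv> multiplicity G"
definition F where "F = Max (gaps G)"

lemma G0: "0 \<in> G" using ns by (simp add: numerical_semigroup_def)
lemma Gadd: "a \<in> G \<Longrightarrow> b \<in> G \<Longrightarrow> a + b \<in> G" using ns by (simp add: numerical_semigroup_def)
lemma finL: "finite L" using ns by (simp add: numerical_semigroup_def gaps_def)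
lemma inL: "x \<in> L \<longleftrightarrow> x \<notin> G" by (simp add: gaps_def)

lemma pos_ex: "\<exists>y. y \<in> G \<and> y > 0"
proof -
  obtain b where "L \<subseteq> {..<b}" using finite_nat_bounded[OF finL] by blast
  hence "b + 1 \<in> G" using inL by auto
  thus ?thesis by (intro exI[of _ "b+1"]) auto
qed

lemma m_in: "m \<in> G" and m_pos: "m > 0"
proof -
  have "m \<in> G \<and> m > 0" unfolding multiplicity_def using pos_ex by (rule LeastI_ex)
  thus "m \<in> G" "m > 0" by auto
qed

lemma below_m: "0 < y \<Longrightarrow> y < m \<Longrightarrow> y \<in> L"
  using not_less_Least[of y "\<lambda>m. m \<in> G \<and> m > 0"] inL unfolding multiplicity_def by auto

lemma one_L: "1 \<in> L" and two_L: "2 \<in> L" using below_m m3 by auto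

lemma L_ne: "L \<noteq> {}" using one_L by auto

lemma F_L: "F \<in> L" unfolding F_def using finL L_ne by (rule Max_in)
lemma le_F: "l \<in> L \<Longrightarrow> l \<le> F" unfolding F_def using finL by simp
lemma gt_F: "y > F \<Longrightarrow> y \<in> G" using le_F inL by force
lemma F2: "F \<ge> 2" using le_F two_L by simp
lemma L_pos: "l \<in> L \<Longrightarrow> l \<ge> 1" using G0 inL by (cases l) auto

lemma gap_sub: "l \<in> L \<Longrightarrow> g \<in> G \<Longrightarrow> g \<le> l \<Longrightarrow> l - g \<in> L"
  using Gadd[of "l - g" g] inL by auto

lemma consec: assumes "\<forall>j<m. a + j \<in> G" "y \<ge> a" shows "y \<in> G"
  using assms(2)
proof (induction y rule: less_induct)
  case (less y)
  show ?case
  proof (cases "y < a + m")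
    case True
    then show ?thesis using assms(1)[rule_format, of "y - a"] less.prems by auto
  next
    case False
    hence "y - m \<in> G" using less m_pos by auto
    then show ?thesis using Gadd[OF _ m_in, of "y - m"] False by auto
  qed
qed

lemma gap_below: "a \<in> G \<Longrightarrow> \<not> m dvd a \<Longrightarrow> \<exists>g\<in>L. g < a \<and> g + m \<in> G"
proof (induction a rule: less_induct)
  case (less a)
  have a0: "a > 0" using less.prems by (cases a) auto
  have am: "a \<ge> m" using below_m[of a] a0 less.prems inL by force
  show ?case
  proof (cases "a - m \<in> L")
    case True
    then show ?thesis using am m_pos less.prems by (intro bexI[of _ "a - m"]) auto
  next
    case False
    hence "a - m \<in> G" using inL by auto
    moreover have "\<not> m dvd (a - m)"
    proof
      assume "m dvd (a - m)"
      hence "m dvd (a - m + m)" by simp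
      thus False using less.prems am by simp
    qed
    ultimately obtain g where "g \<in> L" "g < a - m" "g + m \<in> G" using less.IH[of "a - m"] m_pos a0 by auto
    then show ?thesis by (intro bexI[of _ g]) auto
  qed
qed

lemma sum2I: "a \<in> L \<Longrightarrow> b \<in> L \<Longrightarrow> a + b \<in> sumset 2 L"
  by (simp add: numeral_2_eq_2) force

lemma K1: assumes "2 \<le> x" "x < F" shows "x \<in> sumset 2 L"
proof (rule ccontr)
  assume nx: "x \<notin> sumset 2 L"
  have H: "x - l \<in> G" if "l \<in> L" "l < x" for l
  proof (rule ccontr)
    assume "x - l \<notin> G"
    hence "l + (x - l) \<in> sumset 2 L" using sum2I that inL by blast
    thus False using nx that by simp
  qed
  have xm: "x > m"
  proof (rule ccontr)
    assume "\<not> x > m"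
    hence "x - 1 \<in> L" using below_m[of "x - 1"] assms m3 by auto
    hence "1 + (x - 1) \<in> sumset 2 L" using sum2I one_L by blast
    thus False using nx assms by simp
  qed
  have xL: "x \<in> L"
  proof (rule ccontr)
    assume "x \<notin> L"
    hence xG: "x \<in> G" using inL by auto
    have "\<forall>j<m. (x - m + 1) + j \<in> G"
    proof (intro allI impI)
      fix j assume j: "j < m"
      show "(x - m + 1) + j \<in> G"
      proof (cases "j = m - 1")
        case True thus ?thesis using xG xm m_pos by simp
      next
        case False
        hence "m - 1 - j \<in> L" using below_m[of "m - 1 - j"] j by auto
        moreover have "m - 1 - j < x" using xm j by auto
        ultimately have "x - (m - 1 - j) \<in> G" using H by blast
        moreover have "x - (m - 1 - j) = (x - m + 1) + j" using xm j False by auto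
        ultimately show ?thesis by metis
      qed
    qed
    hence "F \<in> G" using consec[of "x - m + 1" F] assms by auto
    thus False using F_L inL by auto
  qed
  have g1: "x - 1 \<in> G" "x - 2 \<in> G" using H one_L two_L xm m3 by auto
  have "\<not> m dvd (x - 1) \<or> \<not> m dvd (x - 2)"
  proof (rule ccontr)
    assume "\<not> ?thesis"
    hence "m dvd (x - 1) - (x - 2)" using dvd_diff_nat by blast
    moreover have "(x - 1) - (x - 2) = 1" using xm m3 by auto
    ultimately show False using m3 by simp
  qed
  then obtain a where a: "a \<in> G" "\<not> m dvd a" "a < x" using g1 xm m3
    by (metis diff_less less_trans zero_less_numeral zero_less_one m_pos)
  obtain g where g: "g \<in> L" "g < a" "g + m \<in> G" using gap_below[OF a(1,2)] by blast
  have "\<forall>j<m. (x + 1) + j \<in> G"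
  proof (intro allI impI)
    fix j assume j: "j < m"
    show "(x + 1) + j \<in> G"
    proof (cases "j = m - 1")
      case True
      have "x - g \<in> G" using H g a by auto
      hence "(x - g) + (g + m) \<in> G" using Gadd g by blast
      moreover have "(x - g) + (g + m) = x + 1 + j" using True g a m_pos by auto
      ultimately show ?thesis by simp
    next
      case False
      hence "m - 1 - j \<in> L" using below_m[of "m - 1 - j"] j by auto
      moreover have "m - 1 - j < x" using xm j by auto
      ultimately have "x - (m - 1 - j) \<in> G" using H by blast
      hence "x - (m - 1 - j) + m \<in> G" using Gadd m_in by blast
      moreover have "x - (m - 1 - j) + m = (x + 1) + j" using xm j False by auto
      ultimately show ?thesis by simp
    qed
  qed
  hence "F \<in> G" using consec[of "x + 1" F] assms by auto
  thus False using F_L inL by auto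
qed


lemma sumset_bounds: "x \<in> sumset n L \<Longrightarrow> n \<le> x \<and> x \<le> n * F"
proof (induction n arbitrary: x)
  case 0 then show ?case by simp
next
  case (Suc n)
  then obtain a b where "x = a + b" "a \<in> L" "b \<in> sumset n L" by auto
  with Suc.IH[of b] L_pos[of a] le_F[of a] show ?case by auto
qed

lemma sumset_nF: "n * F \<in> sumset n L"
proof (induction n)
  case 0 then show ?case by simp
next
  case (Suc n)
  then show ?case using sumset_SucI[OF F_L Suc] by simp
qed

lemma finite_sumset: "finite (sumset n L)"
  by (rule finite_subset[of _ "{..n*F}"]) (auto dest: sumset_bounds)

lemma R12: "1 \<le> n \<Longrightarrow> n \<le> x \<Longrightarrow> x \<le> 2 * n \<Longrightarrow> x \<in> sumset n L"
proof (induction n arbitrary: x rule: nat_induct_at_least)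
  case base
  then have "x = 1 \<or> x = 2" by auto
  then show ?case using one_L two_L by auto
next
  case (Suc n)
  show ?case
  proof (cases "x \<le> 2 * n + 1")
    case True
    hence "x - 1 \<in> sumset n L" using Suc by auto
    hence "1 + (x - 1) \<in> sumset (Suc n) L" using sumset_SucI one_L by blast
    moreover have "1 + (x - 1) = x" using Suc by simp
    ultimately show ?thesis by simp
  next
    case False
    hence "x - 2 \<in> sumset n L" using Suc by auto
    hence "2 + (x - 2) \<in> sumset (Suc n) L" using sumset_SucI two_L by blast
    moreover have "2 + (x - 2) = x" using Suc False by simp
    ultimately show ?thesis by simp
  qed
qed

lemma Tk: "1 \<le> k \<Longrightarrow> k + 1 \<le> x \<Longrightarrow> x \<le> 2 * k + 2 \<or> (x \<le> k * F + 1 \<and> x \<noteq> k * F)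
    \<Longrightarrow> x \<in> sumset (Suc k) L"
proof (induction k arbitrary: x rule: nat_induct_at_least)
  case base
  show ?case
  proof (cases "x \<le> 4")
    case True thus ?thesis using R12[of 2 x] base by (simp add: numeral_2_eq_2)
  next
    case False
    hence x: "x \<le> F + 1" "x \<noteq> F" using base by auto
    show ?thesis
    proof (cases "x < F")
      case True thus ?thesis using K1[of x] False by (simp add: numeral_2_eq_2)
    next
      case False
      hence "x = 1 + F" using x by auto
      moreover have "1 + F \<in> sumset (Suc 1) L"
        using sumset_SucI[OF one_L sumset_nF[of 1]] by simp
      ultimately show ?thesis by simp
    qed
  qed
next
  case (Suc k)
  show ?case
  proof (cases "x \<le> 2 * Suc k + 2")
    case True thus ?thesis using R12[of "Suc (Suc k)" x] Suc.prems by simp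
  next
    case big: False
    hence x: "x \<le> Suc k * F + 1" "x \<noteq> Suc k * F" using Suc.prems by auto
    have kF: "Suc k * F = k * F + F" by simp
    show ?thesis
    proof (cases "x \<le> k * F + 2 \<and> x - 1 \<noteq> k * F")
      case True
      hence "x - 1 \<in> sumset (Suc k) L" using big by (intro Suc.IH) auto
      hence "1 + (x - 1) \<in> sumset (Suc (Suc k)) L" using sumset_SucI one_L by blast
      moreover have "1 + (x - 1) = x" using big by simp
      ultimately show ?thesis by simp
    next
      case False
      show ?thesis
      proof (cases "x = k * F + 1")
        case True
        hence "x - 2 \<in> sumset (Suc k) L" using big by (intro Suc.IH) auto
        hence "2 + (x - 2) \<in> sumset (Suc (Suc k)) L" using sumset_SucI two_L by blast
        moreover have "2 + (x - 2) = x" using big by simp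
        ultimately show ?thesis by simp
      next
        case False2: False
        hence x3: "x \<ge> k * F + 3" using False big by auto
        define y where "y = x - k * F"
        have y: "3 \<le> y" "y \<le> F + 1" "y \<noteq> F" using x3 x kF unfolding y_def by auto
        show ?thesis
        proof (cases "y < F")
          case True
          then obtain l1 l2 where l: "y = l1 + l2" "l1 \<in> L" "l2 \<in> L"
            using K1[of y] y by (auto simp: numeral_2_eq_2)
          have "l1 + k * F \<in> sumset (Suc k) L" using sumset_SucI[OF l(2) sumset_nF] .
          hence "l2 + (l1 + k * F) \<in> sumset (Suc (Suc k)) L" using sumset_SucI[OF l(3)] by blast
          moreover have "l2 + (l1 + k * F) = x" using l y_def x3 by auto
          ultimately show ?thesis by simp
        next
          case False
          hence "x = 1 + Suc k * F" using y y_def x3 kF by auto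
          moreover have "1 + Suc k * F \<in> sumset (Suc (Suc k)) L"
            using sumset_SucI[OF one_L sumset_nF[of "Suc k"]] .
          ultimately show ?thesis by simp
        qed
      qed
    qed
  qed
qed


definition Dset :: "nat \<Rightarrow> nat set" where
  "Dset k = {c\<in>G. \<not> (k * (F + 1) \<le> c \<and> (\<forall>\<sigma>\<in>sumset k L. c - \<sigma> - k \<in> G))}"

lemma card_L_le: "card L \<le> F"
proof -
  have "L \<subseteq> {1..F}" using L_pos le_F by auto
  hence "card L \<le> card {1..F}" by (rule card_mono[rotated]) simp
  thus ?thesis by simp
qed

lemma card_D:
  assumes k: "1 \<le> k"
  shows "int (card (Dset k)) = int (card (sumset (Suc k) L)) + 2 * int k + 1 - int (card L)"
proof -
  define X where "X = sumset (Suc k) L"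
  define A where "A = {..<k * (F + 1)} - L"
  define B where "B = (\<lambda>y. y + k) ` {y \<in> X. k * F \<le> y}"
  have kF: "k * (F + 1) = k * F + k" by (simp add: algebra_simps)
  have kF2: "k * F \<ge> k + 1" using F2 k
  proof -
    have "k * F \<ge> k * 2" using F2 by simp
    thus ?thesis using k by linarith
  qed
  have DAB: "Dset k = A \<union> B"
  proof (intro equalityI subsetI)
    fix c assume c: "c \<in> Dset k"
    show "c \<in> A \<union> B"
    proof (cases "c < k * (F + 1)")
      case True thus ?thesis using c inL by (auto simp: A_def Dset_def)
    next
      case False
      then obtain \<sigma> where s: "\<sigma> \<in> sumset k L" "c - \<sigma> - k \<notin> G" using c by (auto simp: Dset_def)
      have "\<sigma> \<le> k * F" using sumset_bounds[OF s(1)] by simp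
      hence eq: "(c - \<sigma> - k) + \<sigma> = c - k" using False kF by auto
      have "(c - \<sigma> - k) + \<sigma> \<in> X" unfolding X_def using sumset_SucI[OF _ s(1)] s(2) inL by blast
      hence "c - k \<in> X" using eq by simp
      moreover have "k * F \<le> c - k" "c = (c - k) + k" using False kF by auto
      ultimately have "c \<in> B" unfolding B_def by blast
      thus ?thesis by simp
    qed
  next
    fix c assume "c \<in> A \<union> B"
    thus "c \<in> Dset k"
    proof
      assume "c \<in> A" thus ?thesis using inL by (auto simp: A_def Dset_def)
    next
      assume "c \<in> B"
      then obtain y where y: "y \<in> X" "k * F \<le> y" "c = y + k" unfolding B_def by blast
      then obtain a b where ab: "y = a + b" "a \<in> L" "b \<in> sumset k L" unfolding X_def by auto
      have "k * F \<ge> F" using k by simp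
      hence "c > F" using y k by linarith
      hence "c \<in> G" by (rule gt_F)
      moreover have "c - b - k = a" using ab y by simp
      ultimately show ?thesis using ab inL unfolding Dset_def by auto
    qed
  qed
  have disj: "A \<inter> B = {}" unfolding A_def B_def using kF by auto
  have fX: "finite X" unfolding X_def by (rule finite_sumset)
  have fA: "finite A" unfolding A_def by simp
  have fB: "finite B" unfolding B_def using fX by simp
  have cA: "card A = k * (F + 1) - card L"
  proof -
    have "k * F \<ge> F" using k by simp
    have "L \<subseteq> {..<k * (F + 1)}"
    proof
      fix l assume "l \<in> L"
      hence "l \<le> F" by (rule le_F)
      hence "l < k * (F + 1)" using \<open>k * F \<ge> F\<close> kF k by linarith
      thus "l \<in> {..<k * (F + 1)}" by simp
    qed
    thus ?thesis unfolding A_def using card_Diff_subset[OF finL] by simp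
  qed
  have cB: "card B = card {y \<in> X. k * F \<le> y}"
    unfolding B_def by (rule card_image) (simp add: inj_on_def)
  have low: "{y \<in> X. y < k * F} = {k + 1..<k * F}"
  proof (intro equalityI subsetI)
    fix y assume "y \<in> {y \<in> X. y < k * F}"
    thus "y \<in> {k + 1..<k * F}" using sumset_bounds[of y "Suc k"] unfolding X_def by auto
  next
    fix y assume "y \<in> {k + 1..<k * F}"
    thus "y \<in> {y \<in> X. y < k * F}" unfolding X_def using Tk[OF k, of y] by auto
  qed
  have Xs: "X = {y \<in> X. y < k * F} \<union> {y \<in> X. k * F \<le> y}" by auto
  have "card X = card ({y \<in> X. y < k * F} \<union> {y \<in> X. k * F \<le> y})" using Xs by simp
  also have "\<dots> = card {y \<in> X. y < k * F} + card {y \<in> X. k * F \<le> y}"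
    by (rule card_Un_disjoint) (use fX in auto)
  finally have "card X = card {y \<in> X. y < k * F} + card {y \<in> X. k * F \<le> y}" .
  hence cX: "card X = (k * F - (k + 1)) + card B" using low cB by simp
  have "k * F \<ge> F" using k by simp
  hence cLk: "card L \<le> k + k * F" using card_L_le by linarith
  have "card (Dset k) = card A + card B" using DAB disj fA fB card_Un_disjoint by simp
  hence "int (card (Dset k)) = int (k * (F + 1)) - int (card L) + (int (card X) - int (k * F - (k + 1)))"
    using cA cX cLk k kF by (simp add: of_nat_diff)
  also have "\<dots> = int (card X) + 2 * int k + 1 - int (card L)"
    using kF2 kF by (simp add: of_nat_diff algebra_simps)
  finally show ?thesis unfolding X_def .
qed

end




lemma fls_const_add': "fls_const (a + b) = fls_const a + (fls_const b :: 'a::field fls)"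
  by (simp add: fls_eq_iff)

interpretation fv: vector_space "(\<lambda>c f. fls_const c * f) :: 'a::field \<Rightarrow> 'a fls \<Rightarrow> 'a fls"
  by unfold_locales (simp_all add: distrib_left distrib_right fls_const_add' mult.assoc flip: fls_const_mult_const)

definition proj :: "int set \<Rightarrow> 'a::field fls \<Rightarrow> 'a fls" where
  "proj D x = (\<Sum>d\<in>D. fls_const (x $$ d) * xmon d)"

lemma proj_nth: "finite D \<Longrightarrow> proj D x $$ n = (if n \<in> D then x $$ n else 0)"
  unfolding proj_def by (simp add: fls_nth_sum if_distrib cong: if_cong)

lemma proj_eq: "finite D \<Longrightarrow> proj D x = (\<Sum>d\<in>D. fls_const (x $$ d) * xmon d)"
  by (simp add: proj_def)

lemma proj_lin:
  fixes v :: "nat \<Rightarrow> 'a::field fls"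
  assumes "finite D" "u \<in> SupS B" "D \<inter> B = {}"
  shows "proj D ((\<Sum>i<n. fls_const (c i) * v i) + u) = (\<Sum>i<n. fls_const (c i) * proj D (v i))"
proof -
  have "u $$ d = 0" if "d \<in> D" for d using assms that by (auto simp: SupS_def)
  thus ?thesis using assms(1)
    by (auto simp: fls_eq_iff proj_nth fls_nth_sum)
qed

lemma indep_mon:
  assumes "finite D"
  shows "\<not> fv.dependent (xmon ` D :: 'a::field fls set)"
proof
  assume "fv.dependent (xmon ` D :: 'a fls set)"
  then obtain t u v0 where t: "finite t" "t \<subseteq> xmon ` D" "(\<Sum>v\<in>t. fls_const (u v) * v) = (0::'a fls)"
    and v: "v0 \<in> t" "u v0 \<noteq> 0"
    unfolding fv.dependent_explicit by blast
  from v t obtain d0 where d0: "v0 = xmon d0" by blast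
  have "(\<Sum>v\<in>t. fls_const (u v) * v) $$ d0 = (\<Sum>v\<in>t. u v * v $$ d0)"
    by (simp add: fls_nth_sum)
  also have "\<dots> = u v0 * v0 $$ d0 + (\<Sum>v\<in>t - {v0}. u v * v $$ d0)"
    using t v by (simp add: sum.remove)
  also have "(\<Sum>v\<in>t - {v0}. u v * v $$ d0) = 0"
  proof (rule sum.neutral, rule ballI)
    fix v assume "v \<in> t - {v0}"
    then obtain d where "v = xmon d" "d \<noteq> d0" using t d0 by blast
    thus "u v * v $$ d0 = 0" by simp
  qed
  finally have "(\<Sum>v\<in>t. fls_const (u v) * v) $$ d0 = u v0" using d0 by simp
  with t v show False by simp
qed

lemma xmon_inj: "inj (xmon :: int \<Rightarrow> 'a::field fls)"
proof (rule injI)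
  fix a b assume "(xmon a :: 'a fls) = xmon b"
  hence "(xmon a :: 'a fls) $$ a = xmon b $$ a" by simp
  thus "a = b" by (simp split: if_splits)
qed

lemma quot_dim_SupS:
  assumes "B \<subseteq> A" "finite (A - B)"
  shows "quot_dim (SupS A :: 'a::field fls set) (SupS B) = card (A - B)"
  unfolding quot_dim_def
proof (rule Least_equality)
  define D where "D = A - B"
  have fD: "finite D" using assms D_def by simp
  obtain h where h: "bij_betw h {0..<card D} D" using ex_bij_betw_nat_finite[OF fD] by blast
  show "\<exists>v. (\<forall>i<card (A - B). v i \<in> (SupS A :: 'a fls set)) \<and>
        (\<forall>x\<in>SupS A. \<exists>c. \<exists>u\<in>SupS B. x = (\<Sum>i<card (A - B). fls_const (c i) * v i) + u)"
  proof (intro exI[of _ "\<lambda>i. xmon (h i)"] conjI allI impI ballI)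
    fix i assume "i < card (A - B)"
    hence "h i \<in> D" using h D_def by (auto simp: bij_betw_def)
    thus "(xmon (h i) :: 'a fls) \<in> SupS A" using D_def by (auto intro: mono_Sup)
  next
    fix x :: "'a fls" assume x: "x \<in> SupS A"
    have eq: "(\<Sum>i<card (A - B). fls_const (x $$ h i) * xmon (h i)) = proj D x"
      unfolding proj_def D_def[symmetric]
      using sum.reindex_bij_betw[OF h, of "\<lambda>d. fls_const (x $$ d) * xmon d"]
      by (simp add: lessThan_atLeast0)
    have "x - proj D x \<in> SupS B"
      using x fD by (auto simp: SupS_def proj_nth D_def)
    then show "\<exists>c. \<exists>u\<in>SupS B. x = (\<Sum>i<card (A - B). fls_const (c i) * xmon (h i)) + u"
      by (intro exI[of _ "\<lambda>i. x $$ h i"] bexI[of _ "x - proj D x"]) (simp_all add: eq)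
  qed
next
  fix n :: nat assume "\<exists>v. (\<forall>i<n. v i \<in> (SupS A :: 'a fls set)) \<and>
        (\<forall>x\<in>SupS A. \<exists>c. \<exists>u\<in>SupS B. x = (\<Sum>i<n. fls_const (c i) * v i) + (u :: 'a fls))"
  then obtain v where v: "\<forall>x\<in>SupS A. \<exists>c. \<exists>u\<in>SupS B. x = (\<Sum>i<n. fls_const (c i) * v i) + (u :: 'a fls)"
    by blast
  define D where "D = A - B"
  have fD: "finite D" using assms D_def by simp
  define T where "T = (\<lambda>i. proj D (v i)) ` {..<n}"
  have sub: "(xmon ` D :: 'a fls set) \<subseteq> fv.span T"
  proof
    fix y assume "y \<in> (xmon ` D :: 'a fls set)"
    then obtain d where d: "d \<in> D" "y = xmon d" by blast
    hence "y \<in> SupS A" using D_def by (auto intro: mono_Sup)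
    then obtain c u where u: "u \<in> SupS B" "y = (\<Sum>i<n. fls_const (c i) * v i) + u" using v by blast
    have "proj D y = y" using d fD by (simp add: fls_eq_iff proj_nth)
    also have "proj D y = (\<Sum>i<n. fls_const (c i) * proj D (v i))"
      unfolding u(2) by (rule proj_lin[OF fD u(1)]) (auto simp: D_def)
    finally have "y = (\<Sum>i<n. fls_const (c i) * proj D (v i))" ..
    also have "\<dots> \<in> fv.span T"
      by (intro fv.span_sum fv.span_scale fv.span_base) (auto simp: T_def)
    finally show "y \<in> fv.span T" .
  qed
  have "card (xmon ` D :: 'a fls set) \<le> card T"
    using fv.independent_span_bound[OF _ indep_mon[OF fD] sub] by (simp add: T_def)
  also have "card T \<le> n" unfolding T_def using card_image_le by fastforce
  finally have "card (xmon ` D :: 'a fls set) \<le> n" .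
  moreover have "card (xmon ` D :: 'a fls set) = card D"
    by (rule card_image[OF inj_on_subset[OF xmon_inj]]) simp
  ultimately show "card (A - B) \<le> n" using D_def by simp
qed




definition Ei :: "nat set \<Rightarrow> int set" where
  "Ei G = {n. 0 \<le> n \<or> (\<exists>l\<in>gaps G. n = - int l - 1)}"

fun Sk :: "nat set \<Rightarrow> nat \<Rightarrow> int set" where
  "Sk G 0 = int ` G"
| "Sk G (Suc k) = psum (Ei G) (Sk G k)"

definition Ck :: "nat set \<Rightarrow> nat \<Rightarrow> int set" where
  "Ck G k = {c. \<forall>s\<in>Sk G k. c + s \<in> int ` G}"

lemma SupS_mono: "A \<subseteq> B \<Longrightarrow> SupS A \<subseteq> SupS B"
  by (auto simp: SupS_def)

lemma ring_eq: "monomial_ring T G = SupS (int ` G)"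
  unfolding monomial_ring_def SupS_def
  by (auto simp: image_iff) (metis nat_0_le nat_int)+

lemma omega_eq: "omega_mod T G = SupS (Ei G)"
  unfolding omega_mod_def SupS_def Ei_def by auto

lemma pow_sub: "frac_pow (SupS (int ` G)) (SupS (Ei G)) k \<subseteq> (SupS (Sk G k) :: 'a::field fls set)"
proof (induction k)
  case 0 then show ?case by simp
next
  case (Suc k)
  then show ?case by (simp add: frac_prod_Sup)
qed

lemma pow_mon: "s \<in> Sk G k \<Longrightarrow> (xmon s :: 'a::field fls) \<in> frac_pow (SupS (int ` G)) (SupS (Ei G)) k"
proof (induction k arbitrary: s)
  case 0 then show ?case by (simp add: mono_Sup)
next
  case (Suc k)
  then obtain e s' where es: "s = e + s'" "e \<in> Ei G" "s' \<in> Sk G k" by (auto simp: psum_def)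
  have "(xmon e :: 'a fls) * xmon s' \<in> frac_prod (SupS (Ei G)) (frac_pow (SupS (int ` G)) (SupS (Ei G)) k)"
    by (rule frac_prod_mono) (use es Suc.IH in \<open>auto intro: mono_Sup\<close>)
  moreover have "(xmon e :: 'a fls) * xmon s' = xmon s"
    using fls_X_intpow_times_fls_X_intpow[of e s'] es by simp
  ultimately show ?case by simp
qed

lemma colon_eq:
  "colon (SupS (int ` G)) (frac_pow (SupS (int ` G)) (SupS (Ei G)) k) = (SupS (Ck G k) :: 'a::field fls set)"
proof (intro equalityI subsetI)
  fix x :: "'a fls" assume x: "x \<in> colon (SupS (int ` G)) (frac_pow (SupS (int ` G)) (SupS (Ei G)) k)"
  show "x \<in> SupS (Ck G k)"
    unfolding SupS_def Ck_def
  proof (safe)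
    fix c s assume c: "x $$ c \<noteq> 0" and s: "s \<in> Sk G k"
    have "x * xmon s \<in> SupS (int ` G)" using x pow_mon[OF s] by (auto simp: colon_def)
    moreover have "(x * xmon s) $$ (c + s) = x $$ c"
      by (simp add: fls_X_intpow_times_conv_shift(2))
    ultimately show "c + s \<in> int ` G" using c by (auto simp: SupS_def)
  qed
next
  fix x :: "'a fls" assume x: "x \<in> SupS (Ck G k)"
  show "x \<in> colon (SupS (int ` G)) (frac_pow (SupS (int ` G)) (SupS (Ei G)) k)"
    unfolding colon_def
  proof (safe)
    fix y :: "'a fls" assume "y \<in> frac_pow (SupS (int ` G)) (SupS (Ei G)) k"
    hence "y \<in> SupS (Sk G k)" using pow_sub by blast
    hence "x * y \<in> SupS (psum (Ck G k) (Sk G k))" using x by (rule Sup_times[rotated])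
    moreover have "psum (Ck G k) (Sk G k) \<subseteq> int ` G" by (auto simp: psum_def Ck_def)
    ultimately show "x * y \<in> SupS (int ` G)" using SupS_mono by blast
  qed
qed

context nsg begin

lemma zero_Sk: "0 \<in> Sk G k"
proof (induction k)
  case 0 then show ?case using G0 by simp
next
  case (Suc k)
  have "0 \<in> Ei G" by (simp add: Ei_def)
  then show ?case using Suc by (auto simp: psum_def intro!: exI[of _ 0])
qed

lemma Ck_sub: "Ck G k \<subseteq> int ` G"
  using zero_Sk unfolding Ck_def by force

lemma M1: "\<sigma> \<in> sumset j L \<Longrightarrow> - int \<sigma> - int j \<in> Sk G j"
proof (induction j arbitrary: \<sigma>)
  case 0 then show ?case using G0 by simp
next
  case (Suc j)
  then obtain l b where lb: "\<sigma> = l + b" "l \<in> L" "b \<in> sumset j L" by auto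
  have "- int l - 1 \<in> Ei G" using lb by (auto simp: Ei_def)
  moreover have "- int b - int j \<in> Sk G j" using Suc.IH lb by blast
  ultimately have "(- int l - 1) + (- int b - int j) \<in> psum (Ei G) (Sk G j)"
    unfolding psum_def by blast
  moreover have "- int \<sigma> - int (Suc j) = (- int l - 1) + (- int b - int j)" using lb by simp
  ultimately show ?case by (metis Sk.simps(2))
qed

lemma M2: "0 \<le> n \<Longrightarrow> n - int j * (int F + 1) \<in> Sk G (Suc j)"
proof (induction j arbitrary: n)
  case 0
  have "n \<in> Ei G" using 0 by (simp add: Ei_def)
  hence "n + 0 \<in> psum (Ei G) (Sk G 0)" using G0 unfolding psum_def by force
  then show ?case by simp
next
  case (Suc j)
  have "- int F - 1 \<in> Ei G" using F_L by (auto simp: Ei_def)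
  moreover have "n - int j * (int F + 1) \<in> Sk G (Suc j)" using Suc by blast
  moreover have "n - int (Suc j) * (int F + 1) = (- int F - 1) + (n - int j * (int F + 1))"
    by (simp add: algebra_simps)
  ultimately show ?case by (simp only: Sk.simps psum_def) blast
qed

lemma Q: "s \<in> Sk G k \<Longrightarrow> (\<exists>\<sigma>\<in>sumset k L. \<exists>\<gamma>\<in>G. s = int \<gamma> - int \<sigma> - int k)
   \<or> s \<ge> - (int k - 1) * (int F + 1)"
proof (induction k arbitrary: s)
  case 0 then show ?case by auto
next
  case (Suc k)
  then obtain e s' where es: "s = e + s'" "e \<in> Ei G" "s' \<in> Sk G k" by (auto simp: psum_def)
  have e: "0 \<le> e \<or> (\<exists>l\<in>L. e = - int l - 1)" using es(2) by (simp add: Ei_def)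
  from Suc.IH[OF es(3)] show ?case
  proof
    assume "\<exists>\<sigma>\<in>sumset k L. \<exists>\<gamma>\<in>G. s' = int \<gamma> - int \<sigma> - int k"
    then obtain \<sigma> \<gamma> where sg: "\<sigma> \<in> sumset k L" "\<gamma> \<in> G" "s' = int \<gamma> - int \<sigma> - int k" by blast
    from e show ?thesis
    proof
      assume "0 \<le> e"
      have "\<sigma> \<le> k * F" using sumset_bounds[OF sg(1)] by simp
      hence "int \<sigma> \<le> int k * int F" by (metis of_nat_le_iff of_nat_mult)
      hence "s \<ge> - (int (Suc k) - 1) * (int F + 1)" using \<open>0 \<le> e\<close> es(1) sg(3)
        by (simp add: algebra_simps)
      thus ?thesis ..
    next
      assume "\<exists>l\<in>L. e = - int l - 1"
      then obtain l where l: "l \<in> L" "e = - int l - 1" by blast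
      have "l + \<sigma> \<in> sumset (Suc k) L" using sumset_SucI[OF l(1) sg(1)] .
      moreover have "s = int \<gamma> - int (l + \<sigma>) - int (Suc k)" using l es sg by simp
      ultimately show ?thesis using sg(2) by blast
    qed
  next
    assume s': "s' \<ge> - (int k - 1) * (int F + 1)"
    from e have "e \<ge> - (int F + 1)"
    proof
      assume "\<exists>l\<in>L. e = - int l - 1"
      thus ?thesis using le_F by force
    qed simp
    hence "s \<ge> - (int (Suc k) - 1) * (int F + 1)" using s' es(1) by (simp add: algebra_simps)
    thus ?thesis ..
  qed
qed

lemma char:
  assumes k: "1 \<le> k" and c: "c \<in> G"
  shows "int c \<in> Ck G k \<longleftrightarrow> (k * (F + 1) \<le> c \<and> (\<forall>\<sigma>\<in>sumset k L. c - \<sigma> - k \<in> G))"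
proof
  assume cC: "int c \<in> Ck G k"
  obtain j where j: "k = Suc j" using k by (cases k) auto
  have A: "k * (F + 1) \<le> c"
  proof (rule ccontr)
    assume "\<not> k * (F + 1) \<le> c"
    hence lt: "int c < int k * (int F + 1)" by (metis of_nat_add of_nat_less_iff of_nat_mult of_nat_1 not_le)
    define n where "n = int F - (int c - int j * (int F + 1))"
    have n0: "0 \<le> n" using lt j unfolding n_def by (simp add: algebra_simps)
    have "int c + (n - int j * (int F + 1)) \<in> int ` G"
      using cC M2[OF n0, of j] j unfolding Ck_def by blast
    moreover have "int c + (n - int j * (int F + 1)) = int F" unfolding n_def by simp
    ultimately have "F \<in> G" by (auto simp: image_iff)
    thus False using F_L inL by auto
  qed
  have B: "c - \<sigma> - k \<in> G" if s: "\<sigma> \<in> sumset k L" for \<sigma>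
  proof -
    have "int c + (- int \<sigma> - int k) \<in> int ` G" using cC M1[OF s] unfolding Ck_def by blast
    then obtain \<gamma> where g: "\<gamma> \<in> G" "int c + (- int \<sigma> - int k) = int \<gamma>" by blast
    hence "c - \<sigma> - k = \<gamma>" by linarith
    thus ?thesis using g by simp
  qed
  show "k * (F + 1) \<le> c \<and> (\<forall>\<sigma>\<in>sumset k L. c - \<sigma> - k \<in> G)" using A B by blast
next
  assume R: "k * (F + 1) \<le> c \<and> (\<forall>\<sigma>\<in>sumset k L. c - \<sigma> - k \<in> G)"
  hence ck: "int k * (int F + 1) \<le> int c" by (metis of_nat_add of_nat_le_iff of_nat_mult of_nat_1)
  show "int c \<in> Ck G k" unfolding Ck_def
  proof (safe)
    fix s assume s: "s \<in> Sk G k"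
    from Q[OF s] show "int c + s \<in> int ` G"
    proof
      assume "\<exists>\<sigma>\<in>sumset k L. \<exists>\<gamma>\<in>G. s = int \<gamma> - int \<sigma> - int k"
      then obtain \<sigma> \<gamma> where sg: "\<sigma> \<in> sumset k L" "\<gamma> \<in> G" "s = int \<gamma> - int \<sigma> - int k" by blast
      have "\<sigma> \<le> k * F" using sumset_bounds[OF sg(1)] by simp
      hence le: "\<sigma> + k \<le> c" using R by (simp add: algebra_simps)
      have "(c - \<sigma> - k) + \<gamma> \<in> G" using Gadd R sg by blast
      moreover have "int c + s = int ((c - \<sigma> - k) + \<gamma>)" using le sg by simp
      ultimately show ?thesis by blast
    next
      assume s': "s \<ge> - (int k - 1) * (int F + 1)"
      hence "int c + s \<ge> int F + 1" using ck by (simp add: algebra_simps)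
      hence "nat (int c + s) > F" by linarith
      hence "nat (int c + s) \<in> G" by (rule gt_F)
      moreover have "int c + s = int (nat (int c + s))" using \<open>int c + s \<ge> int F + 1\<close> by simp
      ultimately show ?thesis by (metis image_eqI)
    qed
  qed
qed

lemma finite_Dset: "finite (Dset k)"
proof (rule finite_subset[of _ "{..k * F + F + k}"])
  show "Dset k \<subseteq> {..k * F + F + k}"
  proof
    fix c assume c: "c \<in> Dset k"
    show "c \<in> {..k * F + F + k}"
    proof (cases "c < k * (F + 1)")
      case True thus ?thesis by (simp add: algebra_simps)
    next
      case False
      then obtain \<sigma> where s: "\<sigma> \<in> sumset k L" "c - \<sigma> - k \<notin> G" using c by (auto simp: Dset_def)
      have "\<sigma> \<le> k * F" using sumset_bounds[OF s(1)] by simp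
      moreover have "c - \<sigma> - k \<le> F" using s(2) le_F inL by blast
      ultimately show ?thesis by simp
    qed
  qed
qed simp

lemma diff_eq: "1 \<le> k \<Longrightarrow> int ` G - Ck G k = int ` Dset k"
  using char unfolding Dset_def by auto

lemma d_inv_eq: "1 \<le> k \<Longrightarrow> d_inv (TYPE('a::field)) G k = card (Dset k)"
proof -
  assume k: "1 \<le> k"
  have "d_inv (TYPE('a)) G k = quot_dim (SupS (int ` G) :: 'a fls set) (SupS (Ck G k))"
    unfolding d_inv_def ring_eq omega_eq colon_eq ..
  also have "\<dots> = card (int ` G - Ck G k)"
    by (rule quot_dim_SupS) (use Ck_sub diff_eq[OF k] finite_Dset in auto)
  also have "\<dots> = card (Dset k)" using diff_eq[OF k] by (simp add: card_image)
  finally show ?thesis .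
qed

end

theorem mainTheorem5:
  fixes G :: "nat set" and k :: nat
  assumes "alg_closed TYPE('a::field_char_0)"
    and "numerical_semigroup G"
    and "multiplicity G \<ge> 3"
    and "k \<ge> 1"
  shows "int (d_inv TYPE('a) G k)
           = int (card (sumset (k + 1) (gaps G))) + (2 * int k + 1) - int (card (gaps G))
     \<and> (int (d_inv TYPE('a) G k) > 2 * int k * int (card (gaps G))
          \<longleftrightarrow> int (card (sumset (k + 1) (gaps G))) > (2 * int k + 1) * (int (card (gaps G)) - 1))"
proof -
  interpret nsg G using assms(2,3) by unfold_locales
  have eq: "int (d_inv TYPE('a) G k)
           = int (card (sumset (k + 1) (gaps G))) + (2 * int k + 1) - int (card (gaps G))"
    using d_inv_eq[OF assms(4), where 'a='a] card_D[OF assms(4)] by (simp del: sumset.simps)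
  moreover have "int (d_inv TYPE('a) G k) > 2 * int k * int (card (gaps G))
          \<longleftrightarrow> int (card (sumset (k + 1) (gaps G))) > (2 * int k + 1) * (int (card (gaps G)) - 1)"
    unfolding eq by (simp add: algebra_simps)
  ultimately show ?thesis ..
qed


end
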